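(* Let $\mathrm B_1=\{\mathbf x^{\mathbf d}: d_i<w_{i,1}\ \forall i\}$ and $\mathrm B_2=\{\mathbf x^{\mathbf d}: d_i<w_{i,2}\ \forall i\}$ be boxes in $x_1,\dots,x_r$ (all $w_{i,1},w_{i,2}$ positive integers), and $\beta=\mathrm B_1\cup\mathrm B_2$. Let $w_i=\max(w_{i,1},w_{i,2})$, $V_1=\{x_j: w_{j,1}>w_{j,2}\}$ and $V_2=\{x_k: w_{k,1}<w_{k,2}\}$. Then every minimal generator of $I_\beta$ is either a corner monomial $x_i^{w_i}$ for some $i$, or a two-variable monomial $x_j^{w_{j,2}}x_k^{w_{k,1}}$ with $x_j\in V_1$ and $x_k\in V_2$.
   Context: $I_\beta$ is the monomial ideal generated by all monomials not in $\beta$; its minimal generators are its minimal monomials under divisibility. *)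

theory Defs
  imports Main
begin

text \<open>Monomials in the variables x_0, ..., x_(r-1) are represented by their exponent
  vectors d :: nat => nat, with d i = 0 for i >= r.\<close>

definition monomials :: "nat \<Rightarrow> (nat \<Rightarrow> nat) set" where
  "monomials r = {d. \<forall>i\<ge>r. d i = 0}"

definition mdvd :: "(nat \<Rightarrow> nat) \<Rightarrow> (nat \<Rightarrow> nat) \<Rightarrow> bool" where
  "mdvd d e \<longleftrightarrow> (\<forall>i. d i \<le> e i)"

definition box :: "nat \<Rightarrow> (nat \<Rightarrow> nat) \<Rightarrow> (nat \<Rightarrow> nat) set" where
  "box r w = {d \<in> monomials r. \<forall>i<r. d i < w i}"

definition monomial_ideal :: "nat \<Rightarrow> (nat \<Rightarrow> nat) set \<Rightarrow> (nat \<Rightarrow> nat) set" where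
  "monomial_ideal r S = {e \<in> monomials r. \<exists>g\<in>S. mdvd g e}"

definition I_beta :: "nat \<Rightarrow> (nat \<Rightarrow> nat) set \<Rightarrow> (nat \<Rightarrow> nat) set" where
  "I_beta r \<beta> = monomial_ideal r (monomials r - \<beta>)"

definition min_gens :: "(nat \<Rightarrow> nat) set \<Rightarrow> (nat \<Rightarrow> nat) set" where
  "min_gens I = {m \<in> I. \<forall>m'\<in>I. mdvd m' m \<longrightarrow> m' = m}"

end

theory Submission
  imports Defs
begin

theorem lemma11p2:
  fixes r :: nat and w1 w2 :: "nat \<Rightarrow> nat" and m :: "nat \<Rightarrow> nat"
  assumes pos: "\<forall>i<r. 0 < w1 i \<and> 0 < w2 i"
    and m: "m \<in> min_gens (I_beta r (box r w1 \<union> box r w2))"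
  shows "(\<exists>i<r. m = (\<lambda>l. if l = i then max (w1 i) (w2 i) else 0))
       \<or> (\<exists>j<r. \<exists>k<r. w1 j > w2 j \<and> w1 k < w2 k \<and>
            m = (\<lambda>l. if l = j then w2 j else if l = k then w1 k else 0))"
proof -
  let ?b = "box r w1 \<union> box r w2"
  have mI: "m \<in> I_beta r ?b" and mmin: "\<And>m'. m' \<in> I_beta r ?b \<Longrightarrow> mdvd m' m \<Longrightarrow> m' = m"
    using m unfolding min_gens_def by auto
  have key: "\<And>e. e \<in> monomials r \<Longrightarrow> e \<notin> ?b \<Longrightarrow> mdvd e m \<Longrightarrow> e = m"
  proof -
    fix e assume "e \<in> monomials r" "e \<notin> ?b" "mdvd e m"
    moreover have "mdvd e e" by (simp add: mdvd_def)
    ultimately have "e \<in> I_beta r ?b" unfolding I_beta_def monomial_ideal_def by blast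
    with mmin \<open>mdvd e m\<close> show "e = m" by blast
  qed
  from mI obtain g where g: "g \<in> monomials r" "g \<notin> ?b" "mdvd g m" and mm: "m \<in> monomials r"
    unfolding I_beta_def monomial_ideal_def by blast
  have "g = m" using key g by blast
  with g have nb: "m \<notin> ?b" by simp
  from nb mm obtain j where j: "j < r" "m j \<ge> w2 j" unfolding box_def by force
  from nb mm obtain k where k: "k < r" "m k \<ge> w1 k" unfolding box_def by force
  show ?thesis
  proof (cases "\<exists>i<r. m i \<ge> max (w1 i) (w2 i)")
    case True
    then obtain i where i: "i < r" "m i \<ge> max (w1 i) (w2 i)" by blast
    let ?e = "(\<lambda>l. if l = i then max (w1 i) (w2 i) else 0)"
    have "?e \<in> monomials r" using i by (auto simp: monomials_def)
    moreover have "?e \<notin> ?b" using i by (auto simp: box_def)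
    moreover have "mdvd ?e m" using i by (auto simp: mdvd_def)
    ultimately have "?e = m" using key by blast
    then show ?thesis using i by metis
  next
    case False
    then have "\<not> m j \<ge> w1 j" "\<not> m k \<ge> w2 k" using j k by auto
    then have jk: "w1 j > w2 j" "w1 k < w2 k" "j \<noteq> k" using j k by auto
    let ?e = "(\<lambda>l. if l = j then w2 j else if l = k then w1 k else 0)"
    have "?e \<in> monomials r" using j k by (auto simp: monomials_def)
    moreover have "?e \<notin> ?b" using j k jk by (auto simp: box_def)
    moreover have "mdvd ?e m" using j k by (auto simp: mdvd_def)
    ultimately have "?e = m" using key by blast
    then show ?thesis using j k jk by metis
  qed
qed

end
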